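(* Let $M\ge 2$, $n\ge 1$ and $\sigma>0$. For $z\in\mathbb{R}^M$ and $\theta\in\Theta$ let $Q(z,\theta)=\frac12\theta^\top\theta-z^\top\theta$. For $k=1,\dots,M$ let $P^k$ be the distribution of a Gaussian random vector $Z\in\mathbb{R}^M$ with mean $e_k\frac{\sigma}{2}\sqrt{(\log M)/n}$ and covariance matrix $\sigma^2 I$, and let $A_k(\theta)=E^k[Q(Z,\theta)]$, where $E^k$ is expectation under $P^k$. Let $Z_1,\dots,Z_n$ be i.i.d. with the same distribution as $Z$, and let $E_n^k$ denote expectation with respect to $(Z_1,\dots,Z_n)$ when $Z\sim P^k$. Then there exists an absolute constant $c>0$ (not depending on $M,n,\sigma$) such that $$\inf_{T_n}\ \sup_{k=1,\dots,M}\Big\{E_n^k[A_k(T_n)]-\min_{1\le j\le M}A_k(e_j)\Big\}\ \ge\ c\,\sigma\sqrt{\frac{\log M}{n}},$$ where the infimum is over all selectors $T_n$.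
   Context: $\Theta=\{\theta\in\mathbb{R}^M:\sum_{j=1}^M\theta^{(j)}=1,\ \theta^{(j)}\ge 0\}$ is the simplex, and $e_j$ is the $j$th coordinate unit vector of $\mathbb{R}^M$. A selector is any estimator $T_n$ that is a measurable function of the sample $(Z_1,\dots,Z_n)$ and takes values in $\{e_1,\dots,e_M\}$. $I$ is the $M\times M$ identity matrix. *)

theory Defs
  imports "HOL-Probability.Probability"
begin

text \<open>Vectors of R^M are functions nat => real, coordinates indexed by 0..<M.\<close>

definition unitv :: "nat \<Rightarrow> nat \<Rightarrow> real" where
  "unitv j = (\<lambda>i. if i = j then 1 else 0)"

definition Qloss :: "nat \<Rightarrow> (nat \<Rightarrow> real) \<Rightarrow> (nat \<Rightarrow> real) \<Rightarrow> real" where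
  "Qloss M z \<theta> = (\<Sum>i<M. (\<theta> i)\<^sup>2) / 2 - (\<Sum>i<M. z i * \<theta> i)"

definition gauss_vec :: "nat \<Rightarrow> (nat \<Rightarrow> real) \<Rightarrow> real \<Rightarrow> (nat \<Rightarrow> real) measure" where
  "gauss_vec M \<mu> \<sigma> = PiM {..<M} (\<lambda>i. density lborel (normal_density (\<mu> i) \<sigma>))"

definition lb_mean :: "nat \<Rightarrow> nat \<Rightarrow> real \<Rightarrow> nat \<Rightarrow> nat \<Rightarrow> real" where
  "lb_mean M n \<sigma> k = (\<lambda>i. unitv k i * (\<sigma> / 2) * sqrt (ln (real M) / real n))"

definition Pk :: "nat \<Rightarrow> nat \<Rightarrow> real \<Rightarrow> nat \<Rightarrow> (nat \<Rightarrow> real) measure" where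
  "Pk M n \<sigma> k = gauss_vec M (lb_mean M n \<sigma> k) \<sigma>"

definition Ak :: "nat \<Rightarrow> nat \<Rightarrow> real \<Rightarrow> nat \<Rightarrow> (nat \<Rightarrow> real) \<Rightarrow> real" where
  "Ak M n \<sigma> k \<theta> = (\<integral>z. Qloss M z \<theta> \<partial>Pk M n \<sigma> k)"

definition sample :: "nat \<Rightarrow> nat \<Rightarrow> real \<Rightarrow> nat \<Rightarrow> (nat \<Rightarrow> nat \<Rightarrow> real) measure" where
  "sample M n \<sigma> k = PiM {..<n} (\<lambda>_. Pk M n \<sigma> k)"

definition selector :: "nat \<Rightarrow> nat \<Rightarrow> ((nat \<Rightarrow> nat \<Rightarrow> real) \<Rightarrow> (nat \<Rightarrow> real)) \<Rightarrow> bool" where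
  "selector M n T \<longleftrightarrow>
     T \<in> measurable (PiM {..<n} (\<lambda>_. PiM {..<M} (\<lambda>_. lborel))) (count_space (unitv ` {..<M}))"

end

theory Submission
  imports Defs
begin


lemma indicator_PiE_prod:
  assumes "x \<in> extensional I" "finite I"
  shows "(indicator (Pi\<^sub>E I A) x :: ennreal) = (\<Prod>i\<in>I. indicator (A i) (x i))"
proof (cases "\<forall>i\<in>I. x i \<in> A i")
  case True
  then show ?thesis using assms by (auto simp: indicator_def PiE_def)
next
  case False
  then obtain i where "i \<in> I" "x i \<notin> A i" by auto
  then show ?thesis using assms by (auto simp: indicator_def PiE_def intro!: prod_zero)
qed

lemma PiM_density:
  fixes f :: "'i \<Rightarrow> 'a \<Rightarrow> ennreal"
  assumes fin: "finite I" and sf: "\<And>i. sigma_finite_measure (N i)"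
  and sfd: "\<And>i. sigma_finite_measure (density (N i) (f i))"
  and meas: "\<And>i. f i \<in> borel_measurable (N i)"
  shows "PiM I (\<lambda>i. density (N i) (f i)) = density (PiM I N) (\<lambda>x. \<Prod>i\<in>I. f i (x i))"
proof -
  interpret D: product_sigma_finite "\<lambda>i. density (N i) (f i)"
    by (simp add: product_sigma_finite_def sfd)
  interpret P: product_sigma_finite N
    by (simp add: product_sigma_finite_def sf)
  have Fm: "(\<lambda>x. \<Prod>i\<in>I. f i (x i)) \<in> borel_measurable (PiM I N)"
    using meas by measurable
  show ?thesis
  proof (rule D.PiM_eqI[symmetric])
    show "finite I" by fact
    show "sets (density (PiM I N) (\<lambda>x. \<Prod>i\<in>I. f i (x i))) = sets (PiM I (\<lambda>i. density (N i) (f i)))"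
      by (simp, intro sets_PiM_cong) auto
    fix A assume A: "\<And>i. i \<in> I \<Longrightarrow> A i \<in> sets (density (N i) (f i))"
    then have A': "\<And>i. i \<in> I \<Longrightarrow> A i \<in> sets (N i)" by simp
    have PA: "Pi\<^sub>E I A \<in> sets (PiM I N)"
      using A' by (rule sets_PiM_I_finite[OF fin])
    have "emeasure (density (PiM I N) (\<lambda>x. \<Prod>i\<in>I. f i (x i))) (Pi\<^sub>E I A)
        = (\<integral>\<^sup>+x. (\<Prod>i\<in>I. f i (x i)) * indicator (Pi\<^sub>E I A) x \<partial>PiM I N)"
      by (rule emeasure_density[OF Fm PA])
    also have "\<dots> = (\<integral>\<^sup>+x. (\<Prod>i\<in>I. f i (x i) * indicator (A i) (x i)) \<partial>PiM I N)"
    proof (intro nn_integral_cong)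
      fix x assume "x \<in> space (PiM I N)"
      then have "x \<in> extensional I" by (simp add: space_PiM PiE_def)
      then show "(\<Prod>i\<in>I. f i (x i)) * indicator (Pi\<^sub>E I A) x = (\<Prod>i\<in>I. f i (x i) * indicator (A i) (x i))"
        by (simp add: indicator_PiE_prod[OF _ fin] prod.distrib)
    qed
    also have "\<dots> = (\<Prod>i\<in>I. \<integral>\<^sup>+x. f i x * indicator (A i) x \<partial>N i)"
      using A' meas by (intro P.product_nn_integral_prod fin) auto
    also have "\<dots> = (\<Prod>i\<in>I. emeasure (density (N i) (f i)) (A i))"
      using A' meas by (intro prod.cong refl emeasure_density[symmetric]) auto
    finally show "emeasure (density (PiM I N) (\<lambda>x. \<Prod>i\<in>I. f i (x i))) (Pi\<^sub>E I A)
        = (\<Prod>i\<in>I. emeasure (density (N i) (f i)) (A i))" .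
  qed
qed

definition Fd :: "nat \<Rightarrow> nat \<Rightarrow> real \<Rightarrow> (nat \<Rightarrow> real) \<Rightarrow> (nat \<Rightarrow> nat \<Rightarrow> real) \<Rightarrow> real" where
  "Fd M n \<sigma> \<mu> \<omega> = (\<Prod>j<n. \<Prod>i<M. normal_density (\<mu> i) \<sigma> (\<omega> j i))"

abbreviation LL :: "nat \<Rightarrow> (nat \<Rightarrow> real) measure" where
  "LL M \<equiv> PiM {..<M} (\<lambda>_. lborel)"

abbreviation NN :: "nat \<Rightarrow> nat \<Rightarrow> (nat \<Rightarrow> nat \<Rightarrow> real) measure" where
  "NN M n \<equiv> PiM {..<n} (\<lambda>_. LL M)"

lemma prob_gauss_vec: "0 < \<sigma> \<Longrightarrow> prob_space (gauss_vec M \<mu> \<sigma>)"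
  unfolding gauss_vec_def by (intro prob_space_PiM prob_space_normal_density)

lemma prob_sample_gen: "0 < \<sigma> \<Longrightarrow> prob_space (PiM {..<n} (\<lambda>_. gauss_vec M \<mu> \<sigma>))"
  by (intro prob_space_PiM prob_gauss_vec)

lemma sf_LL: "sigma_finite_measure (LL M)"
proof -
  interpret product_sigma_finite "\<lambda>_. lborel :: real measure"
    by (simp add: product_sigma_finite_def lborel.sigma_finite_measure_axioms)
  show ?thesis by (rule sigma_finite) simp
qed

lemma gauss_dens: assumes s: "0 < \<sigma>" shows "gauss_vec M \<mu> \<sigma> = density (LL M) (\<lambda>z. ennreal (\<Prod>i<M. normal_density (\<mu> i) \<sigma> (z i)))"
proof -
  have "gauss_vec M \<mu> \<sigma> = density (LL M) (\<lambda>z. \<Prod>i<M. ennreal (normal_density (\<mu> i) \<sigma> (z i)))"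
    unfolding gauss_vec_def
    by (rule PiM_density) (auto simp: lborel.sigma_finite_measure_axioms
        intro: prob_space_imp_sigma_finite[OF prob_space_normal_density] s)
  moreover have "(\<lambda>z. \<Prod>i<M. ennreal (normal_density (\<mu> i) \<sigma> (z i))) = (\<lambda>z. ennreal (\<Prod>i<M. normal_density (\<mu> i) \<sigma> (z i)))"
    by (intro ext prod_ennreal) simp
  ultimately show ?thesis by simp
qed

lemma sample_dens: assumes s: "0 < \<sigma>" shows "PiM {..<n} (\<lambda>_. gauss_vec M \<mu> \<sigma>) = density (NN M n) (\<lambda>\<omega>. ennreal (Fd M n \<sigma> \<mu> \<omega>))"
proof -
  have "PiM {..<n} (\<lambda>_. gauss_vec M \<mu> \<sigma>) = density (NN M n) (\<lambda>\<omega>. \<Prod>j<n. ennreal (\<Prod>i<M. normal_density (\<mu> i) \<sigma> (\<omega> j i)))"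
    unfolding gauss_dens[OF s]
    by (rule PiM_density) (auto simp: sf_LL gauss_dens[OF s, symmetric]
        intro: prob_space_imp_sigma_finite prob_gauss_vec s)
  moreover have "(\<lambda>\<omega>. \<Prod>j<n. ennreal (\<Prod>i<M. normal_density (\<mu> i) \<sigma> (\<omega> j i))) = (\<lambda>\<omega>. ennreal (Fd M n \<sigma> \<mu> \<omega>))"
    unfolding Fd_def by (intro ext prod_ennreal) (simp add: prod_nonneg)
  ultimately show ?thesis by simp
qed

lemma comp2_meas: "j \<in> J \<Longrightarrow> i \<in> I \<Longrightarrow> (\<lambda>x. x j i :: real) \<in> borel_measurable (PiM J (\<lambda>_. PiM I (\<lambda>_. lborel)))"
proof -
  assume "j \<in> J" "i \<in> I"
  have "(\<lambda>x. x j) \<in> measurable (PiM J (\<lambda>_. PiM I (\<lambda>_. lborel))) (PiM I (\<lambda>_. lborel))"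
    using \<open>j \<in> J\<close> by (rule measurable_component_singleton)
  moreover have "(\<lambda>y. y i) \<in> measurable (PiM I (\<lambda>_. lborel)) (lborel::real measure)"
    using \<open>i \<in> I\<close> by (rule measurable_component_singleton)
  ultimately have "(\<lambda>x. x j i) \<in> measurable (PiM J (\<lambda>_. PiM I (\<lambda>_. lborel))) (lborel::real measure)"
    using measurable_comp[of "\<lambda>x. x j" _ _ "\<lambda>y. y i"] by (simp add: o_def)
  then show ?thesis by (simp add: measurable_lborel2)
qed

lemma Fd_meas[measurable]: "Fd M n \<sigma> \<mu> \<in> borel_measurable (NN M n)"
  unfolding Fd_def
  by (intro borel_measurable_prod measurable_compose[OF comp2_meas borel_measurable_normal_density]) auto

lemma Fd_nonneg: "0 \<le> Fd M n \<sigma> \<mu> \<omega>"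
  unfolding Fd_def by (intro prod_nonneg) auto

lemma Fd_int: assumes s: "0 < \<sigma>" shows "(\<integral>\<^sup>+\<omega>. ennreal (Fd M n \<sigma> \<mu> \<omega>) \<partial>NN M n) = 1"
proof -
  interpret prob_space "density (NN M n) (\<lambda>\<omega>. ennreal (Fd M n \<sigma> \<mu> \<omega>))"
    using prob_sample_gen[OF s, of n M \<mu>] by (simp add: sample_dens[OF s])
  have "1 = emeasure (density (NN M n) (\<lambda>\<omega>. ennreal (Fd M n \<sigma> \<mu> \<omega>))) (space (NN M n))"
    using emeasure_space_1 by simp
  also have "\<dots> = (\<integral>\<^sup>+\<omega>. ennreal (Fd M n \<sigma> \<mu> \<omega>) \<partial>NN M n)"
    by (subst emeasure_density) (auto intro!: nn_integral_cong)
  finally show ?thesis by simp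
qed


lemma nd_sq:
  assumes s: "0 < \<sigma>"
  shows "(normal_density \<mu> \<sigma> x)\<^sup>2 = normal_density 0 \<sigma> x * normal_density (2*\<mu>) \<sigma> x * exp (\<mu>\<^sup>2 / \<sigma>\<^sup>2)"
proof -
  have e: "(exp (- (x - \<mu>)\<^sup>2 / (2 * \<sigma>\<^sup>2)))\<^sup>2 = exp (- (x - 0)\<^sup>2 / (2 * \<sigma>\<^sup>2)) * exp (- (x - 2*\<mu>)\<^sup>2 / (2 * \<sigma>\<^sup>2)) * exp (\<mu>\<^sup>2 / \<sigma>\<^sup>2)"
  proof -
    have "(exp (- (x - \<mu>)\<^sup>2 / (2 * \<sigma>\<^sup>2)))\<^sup>2 = exp (2 * (- (x - \<mu>)\<^sup>2 / (2 * \<sigma>\<^sup>2)))"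
      by (simp add: power2_eq_square exp_add[symmetric])
    also have "2 * (- (x - \<mu>)\<^sup>2 / (2 * \<sigma>\<^sup>2)) = - (x - 0)\<^sup>2 / (2 * \<sigma>\<^sup>2) + - (x - 2*\<mu>)\<^sup>2 / (2 * \<sigma>\<^sup>2) + \<mu>\<^sup>2 / \<sigma>\<^sup>2"
      using s by (simp add: field_simps power2_eq_square)
    finally show ?thesis by (simp only: exp_add)
  qed
  have "(normal_density \<mu> \<sigma> x)\<^sup>2 = (1 / sqrt (2 * pi * \<sigma>\<^sup>2))\<^sup>2 * (exp (- (x - \<mu>)\<^sup>2 / (2 * \<sigma>\<^sup>2)))\<^sup>2"
    unfolding normal_density_def by (rule power_mult_distrib)
  also have "\<dots> = (1 / sqrt (2 * pi * \<sigma>\<^sup>2)) * (1 / sqrt (2 * pi * \<sigma>\<^sup>2)) * ((exp (- (x - 0)\<^sup>2 / (2 * \<sigma>\<^sup>2))) * exp (- (x - 2*\<mu>)\<^sup>2 / (2 * \<sigma>\<^sup>2)) * exp (\<mu>\<^sup>2 / \<sigma>\<^sup>2))"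
    by (simp only: e power2_eq_square[of "1 / sqrt (2 * pi * \<sigma>\<^sup>2)"])
  also have "\<dots> = normal_density 0 \<sigma> x * normal_density (2*\<mu>) \<sigma> x * exp (\<mu>\<^sup>2 / \<sigma>\<^sup>2)"
    unfolding normal_density_def by (simp only: mult_ac)
  finally show ?thesis .
qed

lemma Fd_sq:
  assumes s: "0 < \<sigma>"
  shows "(Fd M n \<sigma> \<mu> \<omega>)\<^sup>2 = Fd M n \<sigma> (\<lambda>_. 0) \<omega> * Fd M n \<sigma> (\<lambda>i. 2 * \<mu> i) \<omega> * (\<Prod>i<M. exp ((\<mu> i)\<^sup>2 / \<sigma>\<^sup>2)) ^ n"
proof -
  have "(Fd M n \<sigma> \<mu> \<omega>)\<^sup>2 = (\<Prod>j<n. \<Prod>i<M. (normal_density (\<mu> i) \<sigma> (\<omega> j i))\<^sup>2)"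
    unfolding Fd_def by (simp add: prod_power_distrib)
  also have "\<dots> = (\<Prod>j<n. \<Prod>i<M. normal_density 0 \<sigma> (\<omega> j i) * normal_density (2 * \<mu> i) \<sigma> (\<omega> j i) * exp ((\<mu> i)\<^sup>2 / \<sigma>\<^sup>2))"
    by (simp add: nd_sq[OF s])
  also have "\<dots> = Fd M n \<sigma> (\<lambda>_. 0) \<omega> * Fd M n \<sigma> (\<lambda>i. 2 * \<mu> i) \<omega> * (\<Prod>i<M. exp ((\<mu> i)\<^sup>2 / \<sigma>\<^sup>2)) ^ n"
    unfolding Fd_def by (simp add: prod.distrib)
  finally show ?thesis .
qed

lemma amgm_aux:
  fixes a x y :: real
  assumes "0 \<le> a" "0 \<le> x" "0 \<le> y" "a\<^sup>2 \<le> 4 * x * y"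
  shows "a \<le> x + y"
proof -
  have "4 * x * y \<le> (x + y)\<^sup>2"
    using sum_squares_ge_zero[of "x - y" 0] by (simp add: power2_eq_square algebra_simps)
  then have "a\<^sup>2 \<le> (x + y)\<^sup>2" using assms by linarith
  then show ?thesis by (rule power2_le_imp_le) (use assms in linarith)
qed

lemma Qloss_unit: "j < M \<Longrightarrow> Qloss M z (unitv j) = 1/2 - z j"
proof -
  assume j: "j < M"
  have 1: "(\<Sum>i<M. (unitv j i)\<^sup>2) = (\<Sum>i<M. if i = j then 1 else 0)"
    by (rule sum.cong) (auto simp: unitv_def)
  have 2: "(\<Sum>i<M. z i * unitv j i) = (\<Sum>i<M. if i = j then z i else 0)"
    by (rule sum.cong) (auto simp: unitv_def)
  show ?thesis unfolding Qloss_def 1 2 using j by simp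
qed

lemma gauss_comp_integral:
  assumes s: "0 < \<sigma>" and j: "j < M"
  shows "integrable (gauss_vec M \<mu> \<sigma>) (\<lambda>z. z j) \<and> (\<integral>z. z j \<partial>gauss_vec M \<mu> \<sigma>) = \<mu> j"
proof -
  interpret D: product_sigma_finite "\<lambda>i. density lborel (\<lambda>x. ennreal (normal_density (\<mu> i) \<sigma> x))"
    by (simp add: product_sigma_finite_def prob_space_imp_sigma_finite[OF prob_space_normal_density] s)
  define f where "f i = (\<lambda>x::real. if i = j then x else 1)" for i
  have ii: "integrable (density lborel (\<lambda>x. ennreal (normal_density (\<mu> i) \<sigma> x))) (f i)
     \<and> (\<integral>x. f i x \<partial>density lborel (\<lambda>x. ennreal (normal_density (\<mu> i) \<sigma> x))) = (if i = j then \<mu> j else 1)" for i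
  proof (cases "i = j")
    case True
    have hb: "has_bochner_integral lborel (\<lambda>x. normal_density (\<mu> i) \<sigma> x * x) (\<mu> i)"
      using normal_moment_nz_1[OF s] .
    then show ?thesis using True
      by (simp add: f_def integrable_density integral_density has_bochner_integral_iff normal_density_nonneg)
  next
    case False
    interpret prob_space "density lborel (\<lambda>x. ennreal (normal_density (\<mu> i) \<sigma> x))"
      using prob_space_normal_density[OF s] .
    show ?thesis using False prob_space by (simp add: f_def)
  qed
  have eq: "(\<lambda>z. z j) = (\<lambda>z. \<Prod>i<M. f i (z i))"
    using j by (auto simp: f_def if_distrib cong: if_cong)
  have I1: "integrable (PiM {..<M} (\<lambda>i. density lborel (\<lambda>x. ennreal (normal_density (\<mu> i) \<sigma> x)))) (\<lambda>z. \<Prod>i<M. f i (z i))"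
    by (rule D.product_integrable_prod) (use ii in auto)
  have "(\<integral>z. (\<Prod>i<M. f i (z i)) \<partial>PiM {..<M} (\<lambda>i. density lborel (\<lambda>x. ennreal (normal_density (\<mu> i) \<sigma> x))))
      = (\<Prod>i<M. (\<integral>x. f i x \<partial>density lborel (\<lambda>x. ennreal (normal_density (\<mu> i) \<sigma> x))))"
    by (rule D.product_integral_prod) (use ii in auto)
  also have "\<dots> = (\<Prod>i<M. if i = j then \<mu> j else 1)"
    using ii by (intro prod.cong) auto
  also have "\<dots> = \<mu> j" using j by (simp add: prod.delta)
  finally show ?thesis
    unfolding gauss_vec_def eq using I1 by simp
qed


lemma lb_mean_eq: "lb_mean M n \<sigma> k i = (if i = k then \<sigma> / 2 * sqrt (ln (real M) / real n) else 0)"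
  unfolding lb_mean_def unitv_def by simp

lemma Ak_unit:
  assumes s: "0 < \<sigma>" and j: "j < M"
  shows "Ak M n \<sigma> k (unitv j) = 1/2 - lb_mean M n \<sigma> k j"
proof -
  interpret prob_space "gauss_vec M (lb_mean M n \<sigma> k) \<sigma>" by (rule prob_gauss_vec[OF s])
  have gi: "integrable (gauss_vec M (lb_mean M n \<sigma> k) \<sigma>) (\<lambda>z. z j)"
    "(\<integral>z. z j \<partial>gauss_vec M (lb_mean M n \<sigma> k) \<sigma>) = lb_mean M n \<sigma> k j"
    using gauss_comp_integral[OF s j] by auto
  have "Ak M n \<sigma> k (unitv j) = (\<integral>z. 1/2 - z j \<partial>gauss_vec M (lb_mean M n \<sigma> k) \<sigma>)"
    unfolding Ak_def Pk_def using j by (simp add: Qloss_unit)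
  also have "\<dots> = 1/2 - lb_mean M n \<sigma> k j"
  proof -
    have "(\<integral>z. 1/2 - z j \<partial>gauss_vec M (lb_mean M n \<sigma> k) \<sigma>) = (\<integral>z. 1/2 \<partial>gauss_vec M (lb_mean M n \<sigma> k) \<sigma>) - (\<integral>z. z j \<partial>gauss_vec M (lb_mean M n \<sigma> k) \<sigma>)"
      by (rule Bochner_Integration.integral_diff) (use gi in auto)
    then show ?thesis using gi by (simp add: prob_space)
  qed
  finally show ?thesis .
qed

lemma unitv_inj: "unitv a = unitv b \<Longrightarrow> a = b"
proof -
  assume "unitv a = unitv b"
  then have "unitv a b = unitv b b" by simp
  then show "a = b" unfolding unitv_def by (auto split: if_splits)
qed

lemma main_fixed:
  assumes M: "M \<ge> 2" and n: "n \<ge> 1" and s: "\<sigma> > 0" and T: "selector M n T"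
  shows "Max ((\<lambda>k. (\<integral>\<omega>. Ak M n \<sigma> k (T \<omega>) \<partial>sample M n \<sigma> k)
                   - Min ((\<lambda>j. Ak M n \<sigma> k (unitv j)) ` {..<M})) ` {..<M})
        \<ge> 1/10 * \<sigma> * sqrt (ln (real M) / real n)"
proof -
  define \<delta> where "\<delta> = \<sigma> / 2 * sqrt (ln (real M) / real n)"
  have lnM: "0 \<le> ln (real M)" using M by simp
  have \<delta>0: "0 \<le> \<delta>" unfolding \<delta>_def using s lnM by simp
  define \<mu> where "\<mu> k = lb_mean M n \<sigma> k" for k
  have \<mu>eq: "\<mu> k i = (if i = k then \<delta> else 0)" for k i
    unfolding \<mu>_def \<delta>_def by (rule lb_mean_eq)
  define S where "S = unitv ` {..<M}"
  have Tm: "T \<in> measurable (NN M n) (count_space S)"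
    using T unfolding selector_def S_def by simp
  define A where "A k = T -` {unitv k} \<inter> space (NN M n)" for k
  have Asets: "A k \<in> sets (NN M n)" if "k < M" for k
    unfolding A_def using that by (intro measurable_sets[OF Tm]) (auto simp: S_def)
  have samp: "sample M n \<sigma> k = density (NN M n) (\<lambda>\<omega>. ennreal (Fd M n \<sigma> (\<mu> k) \<omega>))" for k
    unfolding sample_def Pk_def \<mu>_def by (rule sample_dens[OF s])
  have Tsp: "\<exists>j<M. T \<omega> = unitv j" if "\<omega> \<in> space (NN M n)" for \<omega>
    using measurable_space[OF Tm that] by (auto simp: S_def)
  define p where "p k = measure (sample M n \<sigma> k) (A k)" for k
  have ex: "(\<integral>\<omega>. Ak M n \<sigma> k (T \<omega>) \<partial>sample M n \<sigma> k)
                   - Min ((\<lambda>j. Ak M n \<sigma> k (unitv j)) ` {..<M}) = \<delta> * (1 - p k)" if k: "k < M" for k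
  proof -
    interpret prob_space "sample M n \<sigma> k"
      unfolding sample_def Pk_def by (rule prob_sample_gen[OF s])
    have Ak': "A k \<in> sets (sample M n \<sigma> k)" using Asets[OF k] by (simp add: samp)
    have "(\<integral>\<omega>. Ak M n \<sigma> k (T \<omega>) \<partial>sample M n \<sigma> k) = (\<integral>\<omega>. 1/2 - \<delta> * indicator (A k) \<omega> \<partial>sample M n \<sigma> k)"
    proof (rule Bochner_Integration.integral_cong[OF refl])
      fix \<omega> assume "\<omega> \<in> space (sample M n \<sigma> k)"
      then have \<omega>: "\<omega> \<in> space (NN M n)" by (simp add: samp)
      then obtain j where j: "j < M" "T \<omega> = unitv j" using Tsp by blast
      have "(\<omega> \<in> A k) = (j = k)" using \<omega> j unitv_inj by (auto simp: A_def)
      then show "Ak M n \<sigma> k (T \<omega>) = 1/2 - \<delta> * indicator (A k) \<omega>"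
        using j Ak_unit[OF s j(1)] \<mu>eq[of k j] unfolding \<mu>_def by (auto simp: indicator_def)
    qed
    also have "\<dots> = 1/2 - \<delta> * p k"
    proof -
      have "(\<integral>\<omega>. 1/2 - \<delta> * indicator (A k) \<omega> \<partial>sample M n \<sigma> k) = (\<integral>\<omega>. 1/2 \<partial>sample M n \<sigma> k) - (\<integral>\<omega>. \<delta> * indicator (A k) \<omega> \<partial>sample M n \<sigma> k)"
      proof (rule Bochner_Integration.integral_diff)
        have "integrable (sample M n \<sigma> k) (indicator (A k) :: _ \<Rightarrow> real)"
          by (rule integrable_real_indicator[OF Ak']) (simp add: emeasure_eq_measure)
        then show "integrable (sample M n \<sigma> k) (\<lambda>\<omega>. \<delta> * indicator (A k) \<omega>)" by simp
      qed simp
      then show ?thesis using Ak' unfolding p_def by (simp add: prob_space)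
    qed
    finally have I: "(\<integral>\<omega>. Ak M n \<sigma> k (T \<omega>) \<partial>sample M n \<sigma> k) = 1/2 - \<delta> * p k" .
    have "(\<lambda>j. Ak M n \<sigma> k (unitv j)) ` {..<M} = (\<lambda>j. if j = k then 1/2 - \<delta> else 1/2) ` {..<M}"
      by (intro image_cong refl) (simp add: Ak_unit[OF s] \<mu>eq[unfolded \<mu>_def])
    moreover have "Min ((\<lambda>j. if j = k then 1/2 - \<delta> else 1/2) ` {..<M}) = 1/2 - \<delta>"
      using k \<delta>0 by (intro Min_eqI) auto
    ultimately show ?thesis using I by (simp add: algebra_simps)
  qed
  have sumb: "(\<Sum>k<M. p k) \<le> 4/5 * real M"
  proof -
    define E where "E = exp (ln (real M) / 4)"
    define t where "t = 4/5 * real M"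
    define c where "c = E / (2 * t)"
    have t0: "0 < t" using M unfolding t_def by simp
    have E0: "0 < E" unfolding E_def by simp
    have c0: "0 < c" unfolding c_def using t0 E0 by simp
    have nd: "\<delta>\<^sup>2 = \<sigma>\<^sup>2 / 4 * (ln (real M) / real n)"
      unfolding \<delta>_def using lnM by (simp add: power_mult_distrib power_divide)
    have Eid: "(\<Prod>i<M. exp ((\<mu> k i)\<^sup>2 / \<sigma>\<^sup>2)) ^ n = E" if k: "k < M" for k
    proof -
      have "(\<Prod>i<M. exp ((\<mu> k i)\<^sup>2 / \<sigma>\<^sup>2)) = (\<Prod>i<M. if i = k then exp (\<delta>\<^sup>2 / \<sigma>\<^sup>2) else 1)"
        by (intro prod.cong refl) (simp add: \<mu>eq)
      also have "\<dots> = exp (\<delta>\<^sup>2 / \<sigma>\<^sup>2)" using k by (simp add: prod.delta)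
      finally have P: "(\<Prod>i<M. exp ((\<mu> k i)\<^sup>2 / \<sigma>\<^sup>2)) = exp (\<delta>\<^sup>2 / \<sigma>\<^sup>2)" .
      have "(\<Prod>i<M. exp ((\<mu> k i)\<^sup>2 / \<sigma>\<^sup>2)) ^ n = exp (real n * (\<delta>\<^sup>2 / \<sigma>\<^sup>2))"
        unfolding P by (simp only: exp_of_nat_mult)
      also have "real n * (\<delta>\<^sup>2 / \<sigma>\<^sup>2) = ln (real M) / 4"
        unfolding nd using s n by (simp add: field_simps)
      finally show ?thesis unfolding E_def .
    qed
    have E4: "E ^ 4 = real M"
    proof -
      have "E ^ 4 = exp (real 4 * (ln (real M) / 4))" unfolding E_def by (simp only: exp_of_nat_mult)
      also have "\<dots> = real M" using M by simp
      finally show ?thesis .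
    qed
    have Ele: "E \<le> 16/25 * real M"
    proof (rule ccontr)
      assume "\<not> ?thesis"
      then have "16/25 * real M < E" by simp
      then have "(16/25 * real M) ^ 4 < E ^ 4" using M by (intro power_strict_mono) auto
      moreover have "real M ^ 3 \<ge> 2 ^ 3" using M by (intro power_mono) auto
      then have "(16/25 * real M) ^ 4 \<ge> real M"
      proof -
        assume h: "real M ^ 3 \<ge> 2 ^ 3"
        have "(16/25 * real M) ^ 4 = (16/25)^4 * (real M * real M ^ 3)" by (simp only: power_mult_distrib) (simp add: eval_nat_numeral)
        also have "\<dots> \<ge> (16/25)^4 * (real M * 8)" using h M by (intro mult_left_mono) auto
        moreover have "(16/25)^4 * (real M * 8) \<ge> real M"
        proof -
          have c1: "(1::real) \<le> (16/25)^4 * 8" by (simp add: eval_nat_numeral)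
          have "real M * 1 \<le> real M * ((16/25)^4 * 8)" by (rule mult_left_mono[OF c1]) simp
          then show ?thesis by (simp add: ac_simps)
        qed
        ultimately show ?thesis by linarith
      qed
      ultimately show False using E4 by simp
    qed
    have F0: "\<And>\<mu>'. 0 \<le> Fd M n \<sigma> \<mu>' \<omega>" for \<omega> by (rule Fd_nonneg)
    have indsum: "(\<Sum>k<M. indicator (A k) \<omega>) \<le> (1::real)" if \<omega>: "\<omega> \<in> space (NN M n)" for \<omega>
    proof -
      obtain j where j: "j < M" "T \<omega> = unitv j" using Tsp[OF \<omega>] by blast
      have "(\<Sum>k<M. indicator (A k) \<omega> :: real) = (\<Sum>k<M. if k = j then 1 else 0)"
        using \<omega> j unitv_inj by (intro sum.cong refl) (auto simp: A_def indicator_def)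
      also have "\<dots> = 1" using j by simp
      finally show ?thesis by simp
    qed
    have pw: "(\<Sum>k<M. Fd M n \<sigma> (\<mu> k) \<omega> * indicator (A k) \<omega>)
        \<le> t/2 * Fd M n \<sigma> (\<lambda>_. 0) \<omega> + (\<Sum>k<M. c * Fd M n \<sigma> (\<lambda>i. 2 * \<mu> k i) \<omega>)"
      if \<omega>: "\<omega> \<in> space (NN M n)" for \<omega>
    proof -
      have am: "Fd M n \<sigma> (\<mu> k) \<omega> \<le> t/2 * Fd M n \<sigma> (\<lambda>_. 0) \<omega> + c * Fd M n \<sigma> (\<lambda>i. 2 * \<mu> k i) \<omega>"
        if k: "k < M" for k
      proof (rule amgm_aux)
        show "0 \<le> Fd M n \<sigma> (\<mu> k) \<omega>" "0 \<le> t/2 * Fd M n \<sigma> (\<lambda>_. 0) \<omega>" "0 \<le> c * Fd M n \<sigma> (\<lambda>i. 2 * \<mu> k i) \<omega>"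
          using t0 c0 F0 by auto
        have "(Fd M n \<sigma> (\<mu> k) \<omega>)\<^sup>2 = Fd M n \<sigma> (\<lambda>_. 0) \<omega> * Fd M n \<sigma> (\<lambda>i. 2 * \<mu> k i) \<omega> * E"
          using Fd_sq[OF s, of M n "\<mu> k" \<omega>] Eid[OF k] by simp
        also have "\<dots> = 4 * (t/2 * Fd M n \<sigma> (\<lambda>_. 0) \<omega>) * (c * Fd M n \<sigma> (\<lambda>i. 2 * \<mu> k i) \<omega>)"
          unfolding c_def using t0 by (simp add: field_simps)
        finally show "(Fd M n \<sigma> (\<mu> k) \<omega>)\<^sup>2 \<le> 4 * (t/2 * Fd M n \<sigma> (\<lambda>_. 0) \<omega>) * (c * Fd M n \<sigma> (\<lambda>i. 2 * \<mu> k i) \<omega>)"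
          by simp
      qed
      have "(\<Sum>k<M. Fd M n \<sigma> (\<mu> k) \<omega> * indicator (A k) \<omega>)
          \<le> (\<Sum>k<M. t/2 * Fd M n \<sigma> (\<lambda>_. 0) \<omega> * indicator (A k) \<omega> + c * Fd M n \<sigma> (\<lambda>i. 2 * \<mu> k i) \<omega>)"
      proof (rule sum_mono)
        fix k assume "k \<in> {..<M}"
        then have k: "k < M" by simp
        have "0 \<le> c * Fd M n \<sigma> (\<lambda>i. 2 * \<mu> k i) \<omega>" using c0 F0 by simp
        then show "Fd M n \<sigma> (\<mu> k) \<omega> * indicator (A k) \<omega>
            \<le> t/2 * Fd M n \<sigma> (\<lambda>_. 0) \<omega> * indicator (A k) \<omega> + c * Fd M n \<sigma> (\<lambda>i. 2 * \<mu> k i) \<omega>"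
          using am[OF k] by (auto simp: indicator_def)
      qed
      also have "\<dots> = t/2 * Fd M n \<sigma> (\<lambda>_. 0) \<omega> * (\<Sum>k<M. indicator (A k) \<omega>) + (\<Sum>k<M. c * Fd M n \<sigma> (\<lambda>i. 2 * \<mu> k i) \<omega>)"
        by (simp add: sum.distrib sum_distrib_left)
      also have "\<dots> \<le> t/2 * Fd M n \<sigma> (\<lambda>_. 0) \<omega> * 1 + (\<Sum>k<M. c * Fd M n \<sigma> (\<lambda>i. 2 * \<mu> k i) \<omega>)"
        using indsum[OF \<omega>] t0 F0 by (intro add_right_mono mult_left_mono) auto
      finally show ?thesis by simp
    qed
    have ennp: "ennreal (p k) = (\<integral>\<^sup>+\<omega>. ennreal (Fd M n \<sigma> (\<mu> k) \<omega> * indicator (A k) \<omega>) \<partial>NN M n)"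
      if k: "k < M" for k
    proof -
      interpret prob_space "sample M n \<sigma> k"
        unfolding sample_def Pk_def by (rule prob_sample_gen[OF s])
      have "ennreal (p k) = emeasure (sample M n \<sigma> k) (A k)"
        unfolding p_def by (simp add: emeasure_eq_measure)
      also have "\<dots> = (\<integral>\<^sup>+\<omega>. ennreal (Fd M n \<sigma> (\<mu> k) \<omega>) * indicator (A k) \<omega> \<partial>NN M n)"
        unfolding samp by (rule emeasure_density[OF _ Asets[OF k]]) simp
      also have "\<dots> = (\<integral>\<^sup>+\<omega>. ennreal (Fd M n \<sigma> (\<mu> k) \<omega> * indicator (A k) \<omega>) \<partial>NN M n)"
        by (intro nn_integral_cong) (auto simp: indicator_def)
      finally show ?thesis .
    qed
    have mA: "(\<lambda>\<omega>. ennreal (Fd M n \<sigma> (\<mu> k) \<omega> * indicator (A k) \<omega>)) \<in> borel_measurable (NN M n)"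
      if k: "k < M" for k
      using Asets[OF k] by measurable
    have "ennreal (\<Sum>k<M. p k) = (\<Sum>k<M. ennreal (p k))"
      by (rule sum_ennreal[symmetric]) (simp add: p_def)
    also have "\<dots> = (\<Sum>k<M. \<integral>\<^sup>+\<omega>. ennreal (Fd M n \<sigma> (\<mu> k) \<omega> * indicator (A k) \<omega>) \<partial>NN M n)"
      by (intro sum.cong refl ennp) simp
    also have "\<dots> = (\<integral>\<^sup>+\<omega>. (\<Sum>k<M. ennreal (Fd M n \<sigma> (\<mu> k) \<omega> * indicator (A k) \<omega>)) \<partial>NN M n)"
      by (rule nn_integral_sum[symmetric]) (simp add: mA)
    also have "\<dots> = (\<integral>\<^sup>+\<omega>. ennreal (\<Sum>k<M. Fd M n \<sigma> (\<mu> k) \<omega> * indicator (A k) \<omega>) \<partial>NN M n)"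
      by (intro nn_integral_cong sum_ennreal) (simp add: F0)
    also have "\<dots> \<le> (\<integral>\<^sup>+\<omega>. ennreal (t/2 * Fd M n \<sigma> (\<lambda>_. 0) \<omega> + (\<Sum>k<M. c * Fd M n \<sigma> (\<lambda>i. 2 * \<mu> k i) \<omega>)) \<partial>NN M n)"
      by (intro nn_integral_mono ennreal_leI pw)
    also have "\<dots> = (\<integral>\<^sup>+\<omega>. ennreal (t/2) * ennreal (Fd M n \<sigma> (\<lambda>_. 0) \<omega>) + (\<Sum>k<M. ennreal c * ennreal (Fd M n \<sigma> (\<lambda>i. 2 * \<mu> k i) \<omega>)) \<partial>NN M n)"
    proof (intro nn_integral_cong)
      fix x
      have nn: "0 \<le> (\<Sum>k<M. c * Fd M n \<sigma> (\<lambda>i. 2 * \<mu> k i) x)" using c0 F0 by (intro sum_nonneg) simp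
      have a: "ennreal (t/2 * Fd M n \<sigma> (\<lambda>_. 0) x + (\<Sum>k<M. c * Fd M n \<sigma> (\<lambda>i. 2 * \<mu> k i) x))
          = ennreal (t/2 * Fd M n \<sigma> (\<lambda>_. 0) x) + ennreal (\<Sum>k<M. c * Fd M n \<sigma> (\<lambda>i. 2 * \<mu> k i) x)"
        by (rule ennreal_plus) (use t0 F0 nn in simp_all)
      have b: "ennreal (t/2 * Fd M n \<sigma> (\<lambda>_. 0) x) = ennreal (t/2) * ennreal (Fd M n \<sigma> (\<lambda>_. 0) x)"
        by (rule ennreal_mult) (use t0 F0 in simp_all)
      have cc: "ennreal (\<Sum>k<M. c * Fd M n \<sigma> (\<lambda>i. 2 * \<mu> k i) x) = (\<Sum>k<M. ennreal (c * Fd M n \<sigma> (\<lambda>i. 2 * \<mu> k i) x))"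
        by (rule sum_ennreal[symmetric]) (use c0 F0 in simp)
      have d: "ennreal (c * Fd M n \<sigma> (\<lambda>i. 2 * \<mu> k i) x) = ennreal c * ennreal (Fd M n \<sigma> (\<lambda>i. 2 * \<mu> k i) x)" for k
        by (rule ennreal_mult) (use c0 F0 in simp_all)
      show "ennreal (t/2 * Fd M n \<sigma> (\<lambda>_. 0) x + (\<Sum>k<M. c * Fd M n \<sigma> (\<lambda>i. 2 * \<mu> k i) x))
          = ennreal (t/2) * ennreal (Fd M n \<sigma> (\<lambda>_. 0) x) + (\<Sum>k<M. ennreal c * ennreal (Fd M n \<sigma> (\<lambda>i. 2 * \<mu> k i) x))"
        by (simp only: a b cc d)
    qed
    also have "\<dots> = ennreal (t/2) * (\<integral>\<^sup>+\<omega>. ennreal (Fd M n \<sigma> (\<lambda>_. 0) \<omega>) \<partial>NN M n)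
        + (\<Sum>k<M. ennreal c * (\<integral>\<^sup>+\<omega>. ennreal (Fd M n \<sigma> (\<lambda>i. 2 * \<mu> k i) \<omega>) \<partial>NN M n))"
      by (simp add: nn_integral_add nn_integral_sum nn_integral_cmult)
    also have "\<dots> = ennreal (t/2 + real M * c)"
      using t0 c0 by (simp add: Fd_int[OF s] ennreal_plus ennreal_mult ennreal_of_nat_eq_real_of_nat)
    finally have le: "ennreal (\<Sum>k<M. p k) \<le> ennreal (t/2 + real M * c)" .
    have nn: "0 \<le> t/2 + real M * c" using t0 c0 by simp
    have "(\<Sum>k<M. p k) \<le> t/2 + real M * c"
      using le by (simp only: ennreal_le_iff[OF nn])
    also have "\<dots> \<le> 4/5 * real M"
    proof -
      have "real M * c = 5/8 * E" unfolding c_def t_def using M by (simp add: field_simps)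
      then show ?thesis using Ele unfolding t_def by simp
    qed
    finally show ?thesis .
  qed
  have "\<exists>k<M. p k \<le> 4/5"
  proof (rule ccontr)
    assume "\<not> ?thesis"
    then have "\<And>k. k \<in> {..<M} \<Longrightarrow> 4/5 < p k" by auto
    moreover have "0 \<in> {..<M}" using M by simp
    then have "{..<M} \<noteq> {}" by blast
    ultimately have "(\<Sum>k<M. 4/5) < (\<Sum>k<M. p k)" by (intro sum_strict_mono) auto
    then show False using sumb by simp
  qed
  then obtain k where k: "k < M" "p k \<le> 4/5" by blast
  have "1/10 * \<sigma> * sqrt (ln (real M) / real n) \<le> \<delta> * (1 - p k)"
  proof -
    have "\<delta> * (1/5) \<le> \<delta> * (1 - p k)" using k \<delta>0 by (intro mult_left_mono) auto
    then show ?thesis unfolding \<delta>_def by simp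
  qed
  also have "\<dots> \<le> Max ((\<lambda>k. (\<integral>\<omega>. Ak M n \<sigma> k (T \<omega>) \<partial>sample M n \<sigma> k)
                   - Min ((\<lambda>j. Ak M n \<sigma> k (unitv j)) ` {..<M})) ` {..<M})"
    using k by (intro Max_ge) (auto simp: ex[symmetric] intro!: image_eqI[where x=k])
  finally show ?thesis .
qed


theorem proposition2p1:
  "\<exists>c>0. \<forall>M n (\<sigma>::real). M \<ge> 2 \<longrightarrow> n \<ge> 1 \<longrightarrow> \<sigma> > 0 \<longrightarrow>
     (\<forall>T. selector M n T \<longrightarrow>
        Max ((\<lambda>k. (\<integral>\<omega>. Ak M n \<sigma> k (T \<omega>) \<partial>sample M n \<sigma> k)
                   - Min ((\<lambda>j. Ak M n \<sigma> k (unitv j)) ` {..<M})) ` {..<M})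
        \<ge> c * \<sigma> * sqrt (ln (real M) / real n))"
proof (rule exI[of _ "1/10"], intro conjI allI impI)
  fix M n T and \<sigma> :: real
  assume "M \<ge> 2" "n \<ge> 1" "\<sigma> > 0" "selector M n T"
  then show "Max ((\<lambda>k. (\<integral>\<omega>. Ak M n \<sigma> k (T \<omega>) \<partial>sample M n \<sigma> k)
                   - Min ((\<lambda>j. Ak M n \<sigma> k (unitv j)) ` {..<M})) ` {..<M})
        \<ge> 1/10 * \<sigma> * sqrt (ln (real M) / real n)"
    by (rule main_fixed)
qed simp

end
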